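(* Let $\rho\in\mathbb R$ and let $\kappa_{\mathbf a}:\mathbb H_\rho\times\mathbb H_\rho\to\mathbb C$ be a positive semi-definite Dirichlet series kernel with coefficient matrix $\mathbf a=(a_{m,n})$. Then $\mathbf a$ is self-adjoint, i.e. $a_{m,n}=\overline{a_{n,m}}$ for all $m,n\ge1$.
   Context: $\mathbb H_\rho=\{\Re s>\rho\}$. $\kappa_{\mathbf a}(s,u)=\sum_{m,n\ge1}a_{m,n}m^{-s}n^{-\bar u}$ is a Dirichlet series kernel on $\mathbb H_\rho$ if $(s,u)\mapsto\kappa_{\mathbf a}(s,\bar u)$ is regularly convergent on $\mathbb H_\rho\times\mathbb H_\rho$ (the double series converges at each point and every row series $\sum_m$ and column series $\sum_n$ converges there). Positive semi-definite: all finite matrices $(\kappa_{\mathbf a}(s_i,s_j))$ are positive semi-definite. *)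

theory Defs
  imports "HOL-Analysis.Analysis"
begin

text \<open>Double sequences are indexed by m, n \<ge> 1 (values at index 0 are ignored).\<close>

definition dpartial :: "(nat \<Rightarrow> nat \<Rightarrow> complex) \<Rightarrow> nat \<Rightarrow> nat \<Rightarrow> complex" where
  "dpartial f M N = (\<Sum>m=1..M. \<Sum>n=1..N. f m n)"

definition dsums :: "(nat \<Rightarrow> nat \<Rightarrow> complex) \<Rightarrow> complex \<Rightarrow> bool" where
  "dsums f L \<longleftrightarrow> ((\<lambda>(M, N). dpartial f M N) \<longlongrightarrow> L) (sequentially \<times>\<^sub>F sequentially)"

definition dsum :: "(nat \<Rightarrow> nat \<Rightarrow> complex) \<Rightarrow> complex" where
  "dsum f = (THE L. dsums f L)"

definition regularly_convergent :: "(nat \<Rightarrow> nat \<Rightarrow> complex) \<Rightarrow> bool" where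
  "regularly_convergent f \<longleftrightarrow>
     (\<exists>L. dsums f L) \<and>
     (\<forall>m\<ge>1. summable (\<lambda>n. f m (Suc n))) \<and>
     (\<forall>n\<ge>1. summable (\<lambda>m. f (Suc m) n))"

definition halfplane :: "real \<Rightarrow> complex set" where
  "halfplane \<rho> = {s. Re s > \<rho>}"

definition ds_term :: "(nat \<Rightarrow> nat \<Rightarrow> complex) \<Rightarrow> complex \<Rightarrow> complex \<Rightarrow> nat \<Rightarrow> nat \<Rightarrow> complex" where
  "ds_term a s u m n = a m n * (of_nat m) powr (-s) * (of_nat n) powr (-u)"

definition kappa :: "(nat \<Rightarrow> nat \<Rightarrow> complex) \<Rightarrow> complex \<Rightarrow> complex \<Rightarrow> complex" where
  "kappa a s u = dsum (ds_term a s (cnj u))"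

definition is_DS_kernel :: "real \<Rightarrow> (nat \<Rightarrow> nat \<Rightarrow> complex) \<Rightarrow> bool" where
  "is_DS_kernel \<rho> a \<longleftrightarrow>
     (\<forall>s\<in>halfplane \<rho>. \<forall>u\<in>halfplane \<rho>. regularly_convergent (ds_term a s u))"

definition psd_kernel_on :: "complex set \<Rightarrow> (complex \<Rightarrow> complex \<Rightarrow> complex) \<Rightarrow> bool" where
  "psd_kernel_on S K \<longleftrightarrow>
     (\<forall>k::nat. \<forall>p::nat \<Rightarrow> complex. \<forall>c::nat \<Rightarrow> complex. (\<forall>i<k. p i \<in> S) \<longrightarrow>
        (let q = (\<Sum>i<k. \<Sum>j<k. cnj (c i) * K (p i) (p j) * c j)
         in Im q = 0 \<and> Re q \<ge> 0))"

end

theory Submission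
  imports Defs
begin

lemma norm_nat_powr: "norm ((of_nat n :: complex) powr z) = real n powr Re z"
  using norm_powr_real_powr[of "of_nat n" z] by simp

lemma ds_unique:
  fixes c :: "nat \<Rightarrow> complex" and \<rho> :: real
  assumes H: "\<And>\<sigma>. \<sigma> > \<rho> \<Longrightarrow> (\<lambda>n. c n * of_nat n powr (-(of_real \<sigma>))) sums 0"
  shows "k \<ge> 1 \<Longrightarrow> c k = 0"
proof (induction k rule: less_induct)
  case (less k)
  define \<sigma>0 where "\<sigma>0 = \<rho> + 1"
  define f where "f \<sigma> n = c n * of_nat n powr (-(of_real \<sigma>))" for \<sigma> n
  have nf: "norm (f \<sigma> n) = norm (c n) * real n powr (-\<sigma>)" for \<sigma> n
    by (simp add: f_def norm_mult norm_nat_powr)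
  have "summable (f \<sigma>0)" using H[of \<sigma>0] unfolding f_def \<sigma>0_def by (auto simp: sums_iff)
  hence "f \<sigma>0 \<longlonglongrightarrow> 0" by (rule summable_LIMSEQ_zero)
  hence "Bseq (f \<sigma>0)" by (rule convergent_imp_Bseq[OF convergentI])
  then obtain B where B0: "B > 0" and B: "\<And>n. norm (f \<sigma>0 n) \<le> B" by (auto simp: Bseq_def)
  define h where "h i = real (i + k + 1) powr (-2)" for i
  have hs: "summable h"
  proof -
    have "summable (\<lambda>n. real n powr (-2))" by (subst summable_real_powr_iff) simp
    hence "summable (\<lambda>i. real (i + (k+1)) powr (-2))" by (rule summable_ignore_initial_segment)
    thus ?thesis unfolding h_def by (simp add: add.assoc)
  qed
  define Z where "Z = suminf h"
  define r where "r = real k / real (k+1)"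
  have kpos: "real k > 0" using less.prems by simp
  have main: "norm (c k) * real k powr (-\<sigma>0) * real k powr (-2) \<le> B * Z * r ^ t" for t :: nat
  proof -
    define \<sigma> where "\<sigma> = \<sigma>0 + 2 + real t"
    have "\<sigma> > \<rho>" unfolding \<sigma>_def \<sigma>0_def by simp
    hence S: "f \<sigma> sums 0" using H unfolding f_def by blast
    have z: "f \<sigma> i = 0" if "i < k" for i
    proof (cases "i = 0")
      case True thus ?thesis by (simp add: f_def)
    next
      case False thus ?thesis using less.IH[of i] that by (simp add: f_def)
    qed
    have "(\<lambda>i. f \<sigma> (i + k)) sums (0 - (\<Sum>i<k. f \<sigma> i))" by (rule sums_split_initial_segment[OF S])
    hence "(\<lambda>i. f \<sigma> (i + k)) sums 0" using z by simp
    hence S2: "(\<lambda>i. f \<sigma> (i + k + 1)) sums (0 - f \<sigma> k)"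
      using sums_Suc_iff[of "\<lambda>i. f \<sigma> (i + k)"] by simp
    have pw: "real n powr (-\<sigma>) = real n powr (-\<sigma>0) * real n powr (-2) / real n ^ t" if "n > 0" for n
    proof -
      have "-\<sigma> = -\<sigma>0 + -2 + - real t" unfolding \<sigma>_def by simp
      hence "real n powr (-\<sigma>) = real n powr (-\<sigma>0) * real n powr (-2) * real n powr (- real t)"
        by (simp only: powr_add)
      also have "real n powr (- real t) = inverse (real n ^ t)"
        using that by (simp add: powr_minus powr_realpow)
      finally show ?thesis by (simp add: divide_inverse)
    qed
    have bnd: "norm (f \<sigma> (i + k + 1)) \<le> B / real (k+1) ^ t * h i" for i
    proof -
      define n where "n = i + k + 1"
      have np: "n > 0" "real n \<ge> real (k+1)" unfolding n_def by auto
      have "norm (f \<sigma> n) = norm (c n) * real n powr (-\<sigma>0) * real n powr (-2) / real n ^ t"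
        using nf pw[OF np(1)] by simp
      also have "\<dots> = norm (f \<sigma>0 n) * real n powr (-2) / real n ^ t" using nf by simp
      also have "\<dots> \<le> B * real n powr (-2) / real (k+1) ^ t"
        apply (rule frac_le)
        using B[of n] np kpos B0 by (auto intro!: mult_right_mono power_mono)
      finally show ?thesis unfolding n_def h_def by simp
    qed
    have sn: "summable (\<lambda>i. norm (f \<sigma> (i + k + 1)))"
      by (rule summable_comparison_test'[where g="\<lambda>i. B / real (k+1) ^ t * h i"])
         (use bnd hs in \<open>auto intro: summable_mult\<close>)
    have "norm (f \<sigma> k) = norm (\<Sum>i. f \<sigma> (i + k + 1))" using S2 by (simp add: sums_iff)
    also have "\<dots> \<le> (\<Sum>i. norm (f \<sigma> (i + k + 1)))" by (rule summable_norm[OF sn])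
    also have "\<dots> \<le> (\<Sum>i. B / real (k+1) ^ t * h i)"
      by (rule suminf_le) (use bnd sn hs in \<open>auto intro: summable_mult\<close>)
    also have "\<dots> = B / real (k+1) ^ t * Z" unfolding Z_def by (rule suminf_mult[OF hs])
    finally have "norm (c k) * real k powr (-\<sigma>0) * real k powr (-2) / real k ^ t \<le> B / real (k+1) ^ t * Z"
      using nf[of \<sigma> k] pw[of k] kpos by simp
    hence "norm (c k) * real k powr (-\<sigma>0) * real k powr (-2) \<le> B / real (k+1) ^ t * Z * real k ^ t"
      using kpos by (simp add: divide_le_eq)
    thus ?thesis by (simp add: r_def power_divide)
  qed
  have r: "0 \<le> r" "r < 1" unfolding r_def using kpos by auto
  have "(\<lambda>t. B * Z * r ^ t) \<longlonglongrightarrow> B * Z * 0"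
    by (intro tendsto_mult tendsto_const LIMSEQ_power_zero) (use r in auto)
  hence "norm (c k) * real k powr (-\<sigma>0) * real k powr (-2) \<le> 0"
    using main by (intro LIMSEQ_le_const[where X="\<lambda>t. B * Z * r ^ t"]) auto
  moreover have "real k powr (-\<sigma>0) > 0" "real k powr (-2) > 0" using kpos by auto
  ultimately show ?case
    by (metis mult_pos_pos norm_ge_zero not_less norm_le_zero_iff order.not_eq_order_implies_strict mult_le_0_iff)
qed

lemma herm:
  assumes P: "psd_kernel_on S K" and s: "s \<in> S" and u: "u \<in> S"
  shows "K s u = cnj (K u s)"
proof -
  have d: "Im (K x x) = 0" if "x \<in> S" for x
    using P[unfolded psd_kernel_on_def, rule_format, of 1 "\<lambda>_. x" "\<lambda>_. 1"] that
    by (simp add: Let_def)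
  define p where "p = (\<lambda>i::nat. if i = 0 then s else u)"
  have pS: "\<And>i. i < 2 \<Longrightarrow> p i \<in> S" using s u by (auto simp: p_def)
  have q: "Im (\<Sum>i<2. \<Sum>j<2. cnj (c i) * K (p i) (p j) * c j) = 0" for c
    using P[unfolded psd_kernel_on_def, rule_format, of 2 p c, OF pS] by (simp add: Let_def)
  have e: "(\<Sum>i<2. \<Sum>j<2. cnj (c i) * K (p i) (p j) * c j) =
     cnj (c 0) * K s s * c 0 + cnj (c 0) * K s u * c 1 + cnj (c 1) * K u s * c 0 + cnj (c 1) * K u u * c 1" for c
    by (simp add: numeral_2_eq_2 p_def)
  have 1: "Im (K s s + K s u + K u s + K u u) = 0"
    using q[of "\<lambda>_. 1", unfolded e] by simp
  have 2: "Im (K s s + K s u * \<i> + cnj \<i> * K u s + cnj \<i> * K u u * \<i>) = 0"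
    using q[of "\<lambda>i. if i = 0 then 1 else \<i>", unfolded e] by simp
  show ?thesis using 1 2 d[OF s] d[OF u] by (simp add: complex_eq_iff)
qed

lemma iter_lim:
  fixes g :: "nat \<Rightarrow> nat \<Rightarrow> complex"
  assumes E: "\<And>e. e > 0 \<Longrightarrow> \<exists>K. \<forall>M\<ge>K. \<forall>N\<ge>K. dist (g M N) L < e"
    and G: "\<And>M. g M \<longlonglongrightarrow> h M"
  shows "h \<longlonglongrightarrow> L"
proof (rule metric_LIMSEQ_I)
  fix r :: real assume r: "r > 0"
  obtain K where K: "\<forall>M\<ge>K. \<forall>N\<ge>K. dist (g M N) L < r/2" using E[of "r/2"] r by auto
  have D: "dist (h M) L \<le> r/2" if "M \<ge> K" for M
  proof (rule LIMSEQ_le_const2)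
    show "(\<lambda>N. dist (g M N) L) \<longlonglongrightarrow> dist (h M) L" by (intro tendsto_dist G tendsto_const)
    show "\<exists>N. \<forall>n\<ge>N. dist (g M n) L \<le> r / 2" using K that by (intro exI[of _ K]) (simp add: less_imp_le)
  qed
  show "\<exists>no. \<forall>n\<ge>no. dist (h n) L < r"
  proof (intro exI[of _ K] allI impI)
    fix n assume "n \<ge> K"
    thus "dist (h n) L < r" using D[of n] r by linarith
  qed
qed

lemma dsums_eps:
  assumes "dsums f L" "e > 0"
  shows "\<exists>K. \<forall>M\<ge>K. \<forall>N\<ge>K. dist (dpartial f M N) L < e"
proof -
  have "eventually (\<lambda>x. dist ((\<lambda>(M, N). dpartial f M N) x) L < e) (sequentially \<times>\<^sub>F sequentially)"
    using assms unfolding dsums_def tendsto_iff by blast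
  thus ?thesis unfolding eventually_prod_sequentially by auto
qed

lemma dsum_eq: "dsums f L \<Longrightarrow> dsum f = L"
  unfolding dsum_def
proof (rule the_equality)
  fix L' assume "dsums f L" "dsums f L'"
  thus "L' = L" unfolding dsums_def
    by (intro tendsto_unique[of "sequentially \<times>\<^sub>F sequentially"]) (auto simp: prod_filter_eq_bot)
qed

lemma dpartial_shift:
  assumes "\<And>n. f 0 n = 0" "\<And>m. f m 0 = 0"
  shows "dpartial f M N = (\<Sum>m<Suc M. \<Sum>n<Suc N. f m n)"
proof -
  have I: "{..<Suc K} = insert 0 {1..K}" for K by auto
  have a: "(\<Sum>n<Suc N. f m n) = (\<Sum>n=1..N. f m n)" for m
    unfolding I using assms(2) by (subst sum.insert) auto
  have b: "(\<Sum>m<Suc M. \<Sum>n=1..N. f m n) = (\<Sum>m=1..M. \<Sum>n=1..N. f m n)"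
    unfolding I using assms(1) by (subst sum.insert) auto
  show ?thesis unfolding dpartial_def a b ..
qed

lemma rows_sums:
  assumes E: "\<And>e. e > 0 \<Longrightarrow> \<exists>K. \<forall>M\<ge>K. \<forall>N\<ge>K. dist (dpartial f M N) L < e"
    and S: "\<And>m. summable (f m)" and z: "\<And>n. f 0 n = 0" "\<And>m. f m 0 = 0"
  shows "(\<lambda>m. suminf (f m)) sums L"
  unfolding sums_def
proof (rule iter_lim[where g="\<lambda>M N. \<Sum>m<M. \<Sum>n<N. f m n"])
  fix e :: real assume "e > 0"
  then obtain K where K: "\<forall>M\<ge>K. \<forall>N\<ge>K. dist (dpartial f M N) L < e" using E by blast
  show "\<exists>K. \<forall>M\<ge>K. \<forall>N\<ge>K. dist (\<Sum>m<M. \<Sum>n<N. f m n) L < e"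
  proof (intro exI[of _ "Suc K"] allI impI)
    fix M N assume MK: "Suc K \<le> M" and NK: "Suc K \<le> N"
    define M' where "M' = M - 1"
    define N' where "N' = N - 1"
    have MM: "M = Suc M'" and NN: "N = Suc N'" using MK NK by (simp_all add: M'_def N'_def)
    have "M' \<ge> K" "N' \<ge> K" using MK NK by (simp_all add: M'_def N'_def)
    hence "dist (dpartial f M' N') L < e" using K by blast
    thus "dist (\<Sum>m<M. \<Sum>n<N. f m n) L < e"
      unfolding MM NN dpartial_shift[of f, OF z] .
  qed
next
  fix M show "(\<lambda>N. \<Sum>m<M. \<Sum>n<N. f m n) \<longlonglongrightarrow> (\<Sum>m<M. suminf (f m))"
    by (intro tendsto_sum summable_LIMSEQ S)
qed

lemma dpartial_transpose: "dpartial (\<lambda>m n. f n m) M N = dpartial f N M"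
  unfolding dpartial_def by (rule sum.swap)

lemma dsums_rows_cols:
  assumes RC: "regularly_convergent f" and z: "\<And>n. f 0 n = 0" "\<And>m. f m 0 = 0"
  shows "\<And>m. summable (f m)" "\<And>n. summable (\<lambda>m. f m n)"
    "(\<lambda>m. suminf (f m)) sums dsum f" "(\<lambda>n. suminf (\<lambda>m. f m n)) sums dsum f"
proof -
  note RCs = RC[unfolded regularly_convergent_def]
  note RC1 = conjunct1[OF RCs]
  note RC2 = conjunct1[OF conjunct2[OF RCs]]
  note RC3 = conjunct2[OF conjunct2[OF RCs]]
  obtain L where L: "dsums f L" using RC1 ..
  have dL: "dsum f = L" using dsum_eq[OF L] .
  show r: "summable (f m)" for m
  proof (cases "m = 0")
    case True
    have "f m = (\<lambda>_. 0)" using z True by auto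
    thus ?thesis by simp
  next
    case False
    hence "m \<ge> 1" by simp
    hence "summable (\<lambda>n. f m (Suc n))" using RC2 by simp
    thus ?thesis by (rule summable_Suc_iff[of "f m", THEN iffD1])
  qed
  show c: "summable (\<lambda>m. f m n)" for n
  proof (cases "n = 0")
    case True
    have "(\<lambda>m. f m n) = (\<lambda>_. 0)" using z True by auto
    thus ?thesis by simp
  next
    case False
    hence "n \<ge> 1" by simp
    hence "summable (\<lambda>m. f (Suc m) n)" using RC3 by simp
    thus ?thesis by (rule summable_Suc_iff[of "\<lambda>m. f m n", THEN iffD1])
  qed
  show "(\<lambda>m. suminf (f m)) sums dsum f" unfolding dL
    by (rule rows_sums[OF dsums_eps[OF L] r z])
  have E: "\<exists>K. \<forall>M\<ge>K. \<forall>N\<ge>K. dist (dpartial (\<lambda>n m. f m n) M N) L < e" if e0: "e > 0" for e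
  proof -
    obtain K where K: "\<forall>M\<ge>K. \<forall>N\<ge>K. dist (dpartial f M N) L < e" using dsums_eps[OF L e0] by (elim exE)
    have "\<forall>M\<ge>K. \<forall>N\<ge>K. dist (dpartial (\<lambda>n m. f m n) M N) L < e"
    proof (intro allI impI)
      fix M N assume MK: "M \<ge> K" and NK: "N \<ge> K"
      show "dist (dpartial (\<lambda>n m. f m n) M N) L < e" unfolding dpartial_transpose[of f M N]
        using K NK MK by blast
    qed
    thus ?thesis by (rule exI)
  qed
  have z': "\<And>n. (\<lambda>n m. f m n) 0 n = 0" "\<And>m. (\<lambda>n m. f m n) m 0 = 0" using z by simp_all
  show "(\<lambda>n. suminf (\<lambda>m. f m n)) sums dsum f" unfolding dL
    by (rule rows_sums[where f="\<lambda>n m. f m n", OF E c z'])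
qed

theorem lemma2p4:
  fixes \<rho> :: real and a :: "nat \<Rightarrow> nat \<Rightarrow> complex"
  assumes "is_DS_kernel \<rho> a"
    and "psd_kernel_on (halfplane \<rho>) (kappa a)"
  shows "\<forall>m\<ge>1. \<forall>n\<ge>1. a m n = cnj (a n m)"
proof (intro allI impI)
  fix m0 n0 :: nat assume m0: "m0 \<ge> 1" and n0: "n0 \<ge> 1"
  define H where "H = halfplane \<rho>"
  have Hc: "cnj x \<in> H" if "x \<in> H" for x using that by (simp add: H_def halfplane_def)
  have Hr: "complex_of_real \<sigma> \<in> H" if "\<sigma> > \<rho>" for \<sigma> using that by (simp add: H_def halfplane_def)
  have z1: "ds_term c s w 0 n = 0" for c s w n by (simp add: ds_term_def)
  have z2: "ds_term c s w m 0 = 0" for c s w m by (simp add: ds_term_def)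
  have RC: "regularly_convergent (ds_term a s w)" if "s \<in> H" "w \<in> H" for s w
    using assms(1) that unfolding is_DS_kernel_def H_def by blast
  define a' where "a' m n = cnj (a n m)" for m n
  define A where "A c n w = (\<lambda>m. c n m * of_nat m powr (-w))"
    for c :: "nat \<Rightarrow> nat \<Rightarrow> complex" and n :: nat and w :: complex
  have rowterm: "ds_term c s w n = (\<lambda>m. of_nat n powr (-s) * A c n w m)" for c s w n
    by (simp add: ds_term_def A_def fun_eq_iff)
  have cnjterm: "cnj (ds_term a (cnj w) (cnj s) m n) = ds_term a' s w n m" for s w m n
    by (simp add: ds_term_def a'_def cnj_powr)
  have summ_A: "summable (A c n w)" if "summable (ds_term c s w n)" "n \<ge> 1" for c s w n
    using that by (simp add: rowterm)
  have suminf_A: "suminf (ds_term c s w n) = of_nat n powr (-s) * suminf (A c n w)"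
    if "n = 0 \<or> summable (ds_term c s w n)" for c s w n
  proof (cases "n = 0")
    case True
    have "ds_term c s w 0 = (\<lambda>_. 0)" by (simp add: fun_eq_iff z1)
    thus ?thesis using True by simp
  next
    case False
    hence "summable (A c n w)" using that summ_A[of c s w n] by simp
    thus ?thesis unfolding rowterm by (rule suminf_mult)
  qed
  have S3: "(\<lambda>m. ds_term a' s w n m) sums cnj (suminf (\<lambda>m. ds_term a (cnj w) (cnj s) m n))"
    if "s \<in> H" "w \<in> H" for s w n
  proof -
    have "summable (\<lambda>m. ds_term a (cnj w) (cnj s) m n)"
      using dsums_rows_cols(2)[OF RC[OF Hc[OF that(2)] Hc[OF that(1)]] z1 z2] .
    hence "(\<lambda>m. ds_term a (cnj w) (cnj s) m n) sums suminf (\<lambda>m. ds_term a (cnj w) (cnj s) m n)"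
      by (rule summable_sums)
    hence "(\<lambda>m. cnj (ds_term a (cnj w) (cnj s) m n)) sums cnj (suminf (\<lambda>m. ds_term a (cnj w) (cnj s) m n))"
      by (rule sums_cnj[THEN iffD2])
    thus ?thesis unfolding cnjterm .
  qed
  define G where "G n w = suminf (A a n w) - suminf (A a' n w)" for n w
  have rowsum: "(\<lambda>n. G n w * of_nat n powr (-s)) sums 0" if s: "s \<in> H" and w: "w \<in> H" for s w
  proof -
    have R: "(\<lambda>n. suminf (ds_term a s w n)) sums dsum (ds_term a s w)"
      by (rule dsums_rows_cols(3)[OF RC[OF s w] z1 z2])
    have C: "(\<lambda>n. suminf (\<lambda>m. ds_term a (cnj w) (cnj s) m n)) sums dsum (ds_term a (cnj w) (cnj s))"
      by (rule dsums_rows_cols(4)[OF RC[OF Hc[OF w] Hc[OF s]] z1 z2])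
    have "kappa a s (cnj w) = cnj (kappa a (cnj w) s)"
      by (rule herm[OF assms(2)]) (use s w Hc in \<open>auto simp: H_def\<close>)
    hence K: "dsum (ds_term a s w) = cnj (dsum (ds_term a (cnj w) (cnj s)))"
      by (simp add: kappa_def)
    have "(\<lambda>n. cnj (suminf (\<lambda>m. ds_term a (cnj w) (cnj s) m n))) sums dsum (ds_term a s w)"
      unfolding K by (rule sums_cnj[THEN iffD2, OF C])
    moreover have "cnj (suminf (\<lambda>m. ds_term a (cnj w) (cnj s) m n)) = suminf (ds_term a' s w n)" for n
      using S3[OF s w, of n] by (simp add: sums_iff)
    ultimately have C': "(\<lambda>n. suminf (ds_term a' s w n)) sums dsum (ds_term a s w)" by simp
    have D: "(\<lambda>n. suminf (ds_term a s w n) - suminf (ds_term a' s w n)) sums 0"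
      using sums_diff[OF R C'] by simp
    have sa: "summable (ds_term a s w n)" for n
      by (rule dsums_rows_cols(1)[OF RC[OF s w] z1 z2])
    have sa': "summable (ds_term a' s w n)" for n
      using S3[OF s w, of n] by (simp add: sums_iff)
    have "suminf (ds_term a s w n) - suminf (ds_term a' s w n) = G n w * of_nat n powr (-s)" for n
      using suminf_A[of n a s w] suminf_A[of n a' s w] sa[of n] sa'[of n]
      by (simp add: G_def algebra_simps)
    thus ?thesis using D by simp
  qed
  define s0 where "s0 = complex_of_real (\<rho> + 1)"
  have s0: "s0 \<in> H" using Hr[of "\<rho> + 1"] by (simp add: s0_def)
  have Gz: "G n w = 0" if "n \<ge> 1" "w \<in> H" for n w
  proof (rule ds_unique[where c="\<lambda>n. G n w" and \<rho> = \<rho>, OF _ that(1)])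
    fix \<sigma> :: real assume "\<sigma> > \<rho>"
    thus "(\<lambda>n. G n w * of_nat n powr (- complex_of_real \<sigma>)) sums 0"
      using rowsum[OF Hr that(2)] by simp
  qed
  have bsum: "(\<lambda>m. (a m0 m - a' m0 m) * of_nat m powr (-w)) sums 0" if w: "w \<in> H" for w
  proof -
    have s1: "summable (A a m0 w)"
      by (rule summ_A[OF dsums_rows_cols(1)[OF RC[OF s0 w] z1 z2] m0])
    have s2: "summable (A a' m0 w)"
      by (rule summ_A[of a' s0 w m0, OF _ m0]) (use S3[OF s0 w, of m0] in \<open>simp add: sums_iff\<close>)
    have "(\<lambda>m. A a m0 w m - A a' m0 w m) sums G m0 w"
      unfolding G_def by (intro sums_diff summable_sums s1 s2)
    thus ?thesis using Gz[OF m0 w] by (simp add: A_def algebra_simps)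
  qed
  have "a m0 n0 - a' m0 n0 = 0"
  proof (rule ds_unique[where c="\<lambda>m. a m0 m - a' m0 m" and \<rho> = \<rho>, OF _ n0])
    fix \<sigma> :: real assume "\<sigma> > \<rho>"
    thus "(\<lambda>n. (a m0 n - a' m0 n) * of_nat n powr (- complex_of_real \<sigma>)) sums 0"
      using bsum[OF Hr] by simp
  qed
  thus "a m0 n0 = cnj (a n0 m0)" by (simp add: a'_def)
qed

end
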